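(* Let $\alpha>0$ and consider Bayesian estimation of a phase $\theta\in[-\pi,\pi)$ with flat prior $p(\theta)=1/(2\pi)$, coherent probe $|\alpha\rangle$, encoded state $\hat R(\theta)|\alpha\rangle=|e^{-i\theta}\alpha\rangle$ with $\hat R(\theta)=\exp(-i\theta\hat a^\dagger\hat a)$, and heterodyne detection with likelihood $p(\beta|\theta)=\tfrac1\pi|\langle\beta|e^{-i\theta}\alpha\rangle|^2$, $\beta\in\mathbb{C}$. Write $\beta=|\beta|e^{-i\phi_\beta}$. Then: (i) $p(\beta)=\tfrac1\pi e^{-(\alpha^2+|\beta|^2)}I_0(2\alpha|\beta|)$ and the posterior is $p(\theta|\beta)=\dfrac{e^{2\alpha|\beta|\cos(\theta-\phi_\beta)}}{2\pi I_0(2\alpha|\beta|)}$; (ii) the estimator $\hat\theta(\beta)=\arg\int_{-\pi}^{\pi}d\theta\,p(\theta|\beta)e^{i\theta}$ equals $\phi_\beta$; (iii) with posterior variance $V_{\mathrm{post}}(\beta)=\int_{-\pi}^{\pi}d\theta\,p(\theta|\beta)\sin^2[\theta-\hat\theta(\beta)]$, the average posterior variance is $$\bar V_{\mathrm{post}}=\int d^2\beta\,p(\beta)\,V_{\mathrm{post}}(\beta)=\frac{1-e^{-\alpha^2}}{2\alpha^2}.$$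
   Context: Single bosonic mode with $[\hat a,\hat a^\dagger]=1$; coherent states $|\beta\rangle=\hat D(\beta)|0\rangle$ with $\hat D(\beta)=\exp(\beta\hat a^\dagger-\beta^*\hat a)$ and $|0\rangle$ the vacuum. Heterodyne detection is the POVM $\{\tfrac1\pi|\beta\rangle\langle\beta|\}_{\beta\in\mathbb{C}}$ with measure $d^2\beta=d\,\mathrm{Re}\beta\,d\,\mathrm{Im}\beta$. $p(\beta)=\int_{-\pi}^{\pi}d\theta\,p(\theta)p(\beta|\theta)$ and $p(\theta|\beta)=p(\beta|\theta)p(\theta)/p(\beta)$. $I_0$ denotes the modified Bessel function of the first kind of order $0$. *)

theory Defs
  imports "HOL-Analysis.Analysis"
begin

text \<open>Coherent state |beta> expanded in the Fock (number) basis: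
  <n|beta> = exp(-|beta|^2/2) beta^n / sqrt(n!)  (this is D(beta)|0>).\<close>
definition coh :: "complex \<Rightarrow> nat \<Rightarrow> complex" where
  "coh b n = complex_of_real (exp (- (cmod b)\<^sup>2 / 2)) * b ^ n / complex_of_real (sqrt (fact n))"

definition coh_inner :: "complex \<Rightarrow> complex \<Rightarrow> complex" where
  "coh_inner b g = (\<Sum>n. cnj (coh b n) * coh g n)"

definition lik :: "real \<Rightarrow> complex \<Rightarrow> real \<Rightarrow> real" where
  "lik a b t = (1 / pi) * (cmod (coh_inner b (cis (- t) * complex_of_real a)))\<^sup>2"

definition prior :: "real \<Rightarrow> real" where
  "prior t = 1 / (2 * pi)"

definition p_marg :: "real \<Rightarrow> complex \<Rightarrow> real" where
  "p_marg a b = integral {-pi..pi} (\<lambda>t. prior t * lik a b t)"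

definition post :: "real \<Rightarrow> complex \<Rightarrow> real \<Rightarrow> real" where
  "post a b t = lik a b t * prior t / p_marg a b"

definition besselI0 :: "real \<Rightarrow> real" where
  "besselI0 x = (\<Sum>k. (x / 2) ^ (2 * k) / (fact k)\<^sup>2)"

definition est :: "real \<Rightarrow> complex \<Rightarrow> real" where
  "est a b = Arg (integral {-pi..pi} (\<lambda>t. complex_of_real (post a b t) * cis t))"

definition Vpost :: "real \<Rightarrow> complex \<Rightarrow> real" where
  "Vpost a b = integral {-pi..pi} (\<lambda>t. post a b t * (sin (t - est a b))\<^sup>2)"

end

theory Submission
  imports Defs "HOL-Probability.Distributions"
begin


lemma emeasure_disc:
  "emeasure lborel {z::complex. (cmod z)^2 < c} = ennreal (pi * max c 0)"
proof (cases "c \<le> 0")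
  case True
  then have "{z::complex. (cmod z)^2 < c} = {}"
    by (auto intro: order.trans[OF _ zero_le_power2] simp: not_less)
  then show ?thesis using True by simp
next
  case False
  have "{z::complex. (cmod z)^2 < c} = ball 0 (sqrt c)"
  proof (intro set_eqI iffI)
    fix z :: complex assume "z \<in> {z. (cmod z)^2 < c}"
    then have "cmod z < sqrt c" by (simp add: real_less_rsqrt)
    then show "z \<in> ball 0 (sqrt c)" by simp
  next
    fix z :: complex assume "z \<in> ball 0 (sqrt c)"
    then have "cmod z < sqrt c" by simp
    then have "(cmod z)^2 < (sqrt c)^2" by (intro power_strict_mono) auto
    then show "z \<in> {z. (cmod z)^2 < c}" using False by simp
  qed
  then show ?thesis using False
    by (simp add: emeasure_ball unit_ball_vol_2)
qed

lemma radial_measure: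
  "distr lborel borel (\<lambda>z::complex. (cmod z)^2) = density lborel (\<lambda>u. ennreal pi * indicator {0..} u)"
  (is "?M = ?N")
proof (rule measure_eqI_generator_eq_countable[where E="range lessThan" and \<Omega>=UNIV and A="range (\<lambda>n::nat. {..<real n})"])
  show "Int_stable (range lessThan :: real set set)"
  proof (unfold Int_stable_def, safe)
    fix a b :: real
    have "{..<a} \<inter> {..<b} = {..<min a b}" by auto
    then show "{..<a} \<inter> {..<b} \<in> range lessThan" by (metis rangeI)
  qed
  show "range lessThan \<subseteq> Pow (UNIV :: real set)" by auto
  show "sets ?M = sigma_sets UNIV (range lessThan)"
    by (simp add: borel_Iio)
  show "sets ?N = sigma_sets UNIV (range lessThan)"
    by (simp add: borel_Iio)
  fix X :: "real set" assume "X \<in> range lessThan"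
  then obtain c where X: "X = {..<c}" by auto
  have "emeasure ?M X = emeasure lborel {z::complex. (cmod z)^2 < c}"
    unfolding X by (subst emeasure_distr) (auto intro!: arg_cong[where f="emeasure lborel"])
  also have "\<dots> = ennreal (pi * max c 0)" by (rule emeasure_disc)
  also have "\<dots> = emeasure ?N X"
  proof -
    have eq: "(\<lambda>x. ennreal pi * indicator {0..} x * indicator {..<c} x) = (\<lambda>x. ennreal pi * indicator {0..<c} x)"
      by (auto simp: indicator_def fun_eq_iff)
    have "emeasure ?N X = (\<integral>\<^sup>+x. ennreal pi * indicator {0..<c} x \<partial>lborel)"
      unfolding X by (subst emeasure_density) (auto simp: eq)
    also have "\<dots> = ennreal pi * emeasure lborel {0..<c}"
      by (rule nn_integral_cmult_indicator) auto
    also have "\<dots> = ennreal (pi * max c 0)"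
      by (cases "c \<le> 0") (auto simp: ennreal_mult')
    finally show ?thesis by simp
  qed
  finally show "emeasure ?M X = emeasure ?N X" .
next
  show "range (\<lambda>n::nat. {..<real n}) \<subseteq> range lessThan" by auto
  show "\<Union> (range (\<lambda>n::nat. {..<real n})) = UNIV"
    by (auto intro: reals_Archimedean2)
  show "countable (range (\<lambda>n::nat. {..<real n}))" by auto
  fix a assume "a \<in> range (\<lambda>n::nat. {..<real n})"
  then obtain n where a: "a = {..<real n}" by auto
  show "emeasure ?M a \<noteq> \<infinity>"
    unfolding a by (subst emeasure_distr) (auto simp: emeasure_disc[unfolded Collect_mono_iff, simplified] vimage_def)
qed

lemma radial_nn_integral:
  fixes h :: "real \<Rightarrow> ennreal"
  assumes h[measurable]: "h \<in> borel_measurable borel"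
  shows "(\<integral>\<^sup>+z. h ((cmod z)^2) \<partial>(lborel::complex measure)) = ennreal pi * (\<integral>\<^sup>+u. h u * indicator {0..} u \<partial>lborel)"
proof -
  have "(\<integral>\<^sup>+z. h ((cmod z)^2) \<partial>(lborel::complex measure)) =
        (\<integral>\<^sup>+u. h u \<partial>distr lborel borel (\<lambda>z::complex. (cmod z)^2))"
    by (subst nn_integral_distr) auto
  also have "\<dots> = (\<integral>\<^sup>+u. h u \<partial>density lborel (\<lambda>u. ennreal pi * indicator {0..} u))"
    by (simp add: radial_measure)
  also have "\<dots> = (\<integral>\<^sup>+u. ennreal pi * (h u * indicator {0..} u) \<partial>lborel)"
    by (subst nn_integral_density) (auto simp: mult_ac)
  also have "\<dots> = ennreal pi * (\<integral>\<^sup>+u. h u * indicator {0..} u \<partial>lborel)"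
    by (rule nn_integral_cmult) auto
  finally show ?thesis .
qed

lemma gauss_moment:
  "(\<integral>\<^sup>+z. ennreal ((cmod z)^(2*k) * exp (- ((cmod z)^2))) \<partial>(lborel::complex measure)) = ennreal (pi * fact k)"
proof -
  have "(\<integral>\<^sup>+z. ennreal ((cmod z)^(2*k) * exp (- ((cmod z)^2))) \<partial>(lborel::complex measure)) =
     (\<integral>\<^sup>+z. (\<lambda>u. ennreal (u^k * exp (-u))) ((cmod z)^2) \<partial>(lborel::complex measure))"
    by (simp add: power_mult)
  also have "\<dots> = ennreal pi * (\<integral>\<^sup>+u. ennreal (u^k * exp (-u)) * indicator {0..} u \<partial>lborel)"
    by (rule radial_nn_integral) auto
  also have "\<dots> = ennreal (pi * fact k)"
    by (simp add: nn_intergal_power_times_exp_Ici ennreal_mult')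
  finally show ?thesis .
qed

lemma exp_minus_one_series:
  fixes x :: real
  assumes "x \<noteq> 0"
  shows "(\<lambda>k. x^k / fact (Suc k)) sums ((exp x - 1) / x)"
proof -
  have "(\<lambda>n. x^n / fact n) sums exp x"
    using exp_converges[of x] by (simp add: real_scaleR_def field_simps)
  then have "(\<lambda>n. x^(Suc n) / fact (Suc n)) sums (exp x - 1)"
    by (subst sums_Suc_iff) simp
  then have "(\<lambda>n. x^(Suc n) / fact (Suc n) / x) sums ((exp x - 1) / x)"
    by (rule sums_divide)
  moreover have "(\<lambda>n. x^(Suc n) / fact (Suc n) / x) = (\<lambda>k. x^k / fact (Suc k))"
    using assms by (auto simp: fun_eq_iff simp del: fact_Suc)
  ultimately show ?thesis by simp
qed

lemma G_integral:
  fixes a :: real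
  assumes a: "a > 0"
  shows "((\<lambda>z::complex. exp (- (a^2)) / (2*pi) * (\<Sum>k. a^(2*k) / (fact k * fact (Suc k)) * ((cmod z)^(2*k) * exp (- ((cmod z)^2)))))
     has_integral ((1 - exp (- (a^2))) / (2*a^2))) UNIV"
proof (rule nn_integral_has_integral)
  define c where "c k = a^(2*k) / (fact k * fact (Suc k))" for k
  have c_nn: "0 \<le> c k" for k by (simp add: c_def)
  have summ: "summable (\<lambda>k. c k * ((cmod z)^(2*k) * exp (- ((cmod z)^2))))" for z :: complex
  proof -
    have "summable (\<lambda>n. inverse (fact n) * (a^2*(cmod z)^2)^n * exp (- ((cmod z)^2)))"
      by (intro summable_mult2 summable_exp)
    then have s2: "summable (\<lambda>n. (a^2 * (cmod z)^2)^n / fact n * exp (- ((cmod z)^2)))"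
      by (simp add: divide_inverse mult_ac)
    show ?thesis
    proof (rule summable_comparison_test[OF _ s2])
    show "\<exists>N. \<forall>n\<ge>N. norm (c n * ((cmod z)^(2*n) * exp (- ((cmod z)^2)))) \<le> (a^2 * (cmod z)^2)^n / fact n * exp (- ((cmod z)^2))"
    proof (intro exI allI impI)
      fix n :: nat
      have "1 \<le> (fact (Suc n) :: real)" by (rule fact_ge_1)
      have eq: "c n * (cmod z)^(2*n) = (a^2 * (cmod z)^2)^n / (fact n * fact (Suc n))"
        by (simp add: c_def power_mult power_mult_distrib)
      have "(a^2 * (cmod z)^2)^n / (fact n * fact (Suc n)) \<le> (a^2 * (cmod z)^2)^n / fact n"
        using \<open>1 \<le> (fact (Suc n) :: real)\<close>
        by (intro divide_left_mono) (auto simp del: fact_Suc)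
      then have "c n * (cmod z)^(2*n) \<le> (a^2 * (cmod z)^2)^n / fact n"
        by (simp only: eq)
      then have "c n * (cmod z)^(2*n) * exp (- ((cmod z)^2)) \<le> (a^2 * (cmod z)^2)^n / fact n * exp (- ((cmod z)^2))"
        by (rule mult_right_mono) simp
      then show "norm (c n * ((cmod z)^(2*n) * exp (- ((cmod z)^2)))) \<le> (a^2 * (cmod z)^2)^n / fact n * exp (- ((cmod z)^2))"
        using c_nn[of n] by (simp add: abs_mult mult.assoc)
    qed
  qed
  qed
  show "(\<lambda>z::complex. exp (- (a^2)) / (2*pi) * (\<Sum>k. a^(2*k) / (fact k * fact (Suc k)) * ((cmod z)^(2*k) * exp (- ((cmod z)^2))))) \<in> borel_measurable borel"
    by measurable
  show "0 \<le> exp (- (a^2)) / (2*pi) * (\<Sum>k. a^(2*k) / (fact k * fact (Suc k)) * ((cmod z)^(2*k) * exp (- ((cmod z)^2))))" for z :: complex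
    using summ[of z] by (intro mult_nonneg_nonneg suminf_nonneg) (auto simp: c_def)
  show "0 \<le> (1 - exp (- (a^2))) / (2*a^2)" using a by simp
  have ser: "(\<lambda>k. c k * (pi * fact k)) sums (pi * ((exp (a^2) - 1) / a^2))"
  proof -
    have "(\<lambda>k. pi * ((a^2)^k / fact (Suc k))) sums (pi * ((exp (a^2) - 1) / a^2))"
      using exp_minus_one_series[of "a^2"] a by (intro sums_mult) auto
    moreover have "c k * (pi * fact k) = pi * ((a^2)^k / fact (Suc k))" for k
      unfolding c_def by (simp add: power_mult field_simps power_commutes flip: power_mult del: fact_Suc)
    ultimately show ?thesis by simp
  qed
  have "(\<integral>\<^sup>+z. ennreal (exp (- (a^2)) / (2*pi) * (\<Sum>k. c k * ((cmod z)^(2*k) * exp (- ((cmod z)^2))))) \<partial>(lborel::complex measure))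
      = (\<integral>\<^sup>+z. ennreal (exp (- (a^2)) / (2*pi)) * (\<Sum>k. ennreal (c k * ((cmod z)^(2*k) * exp (- ((cmod z)^2))))) \<partial>lborel)"
  proof (intro nn_integral_cong)
    fix z :: complex
    have "(\<Sum>k. ennreal (c k * ((cmod z)^(2*k) * exp (- ((cmod z)^2))))) = ennreal (\<Sum>k. c k * ((cmod z)^(2*k) * exp (- ((cmod z)^2))))"
      using summ[of z] c_nn by (intro suminf_ennreal_eq) (auto simp: summable_sums)
    then show "ennreal (exp (- (a^2)) / (2*pi) * (\<Sum>k. c k * ((cmod z)^(2*k) * exp (- ((cmod z)^2))))) =
        ennreal (exp (- (a^2)) / (2*pi)) * (\<Sum>k. ennreal (c k * ((cmod z)^(2*k) * exp (- ((cmod z)^2)))))"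
      by (subst ennreal_mult') auto
  qed
  also have "\<dots> = ennreal (exp (- (a^2)) / (2*pi)) * (\<integral>\<^sup>+z. (\<Sum>k. ennreal (c k * ((cmod z)^(2*k) * exp (- ((cmod z)^2))))) \<partial>(lborel::complex measure))"
    by (rule nn_integral_cmult) measurable
  also have "(\<integral>\<^sup>+z. (\<Sum>k. ennreal (c k * ((cmod z)^(2*k) * exp (- ((cmod z)^2))))) \<partial>(lborel::complex measure))
      = (\<Sum>k. (\<integral>\<^sup>+z. ennreal (c k * ((cmod z)^(2*k) * exp (- ((cmod z)^2)))) \<partial>(lborel::complex measure)))"
    by (rule nn_integral_suminf) measurable
  also have "\<dots> = (\<Sum>k. ennreal (c k * (pi * fact k)))"
  proof (intro suminf_cong)
    fix k
    have "(\<integral>\<^sup>+z. ennreal (c k * ((cmod z)^(2*k) * exp (- ((cmod z)^2)))) \<partial>(lborel::complex measure))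
        = (\<integral>\<^sup>+z. ennreal (c k) * ennreal ((cmod z)^(2*k) * exp (- ((cmod z)^2))) \<partial>(lborel::complex measure))"
      using c_nn by (simp add: ennreal_mult)
    also have "\<dots> = ennreal (c k) * ennreal (pi * fact k)"
      by (subst nn_integral_cmult) (auto simp: gauss_moment)
    finally show "(\<integral>\<^sup>+z. ennreal (c k * ((cmod z)^(2*k) * exp (- ((cmod z)^2)))) \<partial>(lborel::complex measure)) = ennreal (c k * (pi * fact k))"
      using c_nn by (simp add: ennreal_mult)
  qed
  also have "\<dots> = ennreal (pi * ((exp (a^2) - 1) / a^2))"
    using ser c_nn by (intro suminf_ennreal_eq) auto
  also have "ennreal (exp (- (a^2)) / (2*pi)) * ennreal (pi * ((exp (a^2) - 1) / a^2)) = ennreal ((1 - exp (- (a^2))) / (2*a^2))"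
  proof -
    have "exp (- (a^2)) / (2*pi) * (pi * ((exp (a^2) - 1) / a^2)) = (1 - exp (- (a^2))) / (2*a^2)"
      using a by (simp add: field_simps exp_minus)
    then show ?thesis by (simp add: ennreal_mult'[symmetric])
  qed
  finally show "(\<integral>\<^sup>+z. ennreal (exp (- (a^2)) / (2*pi) * (\<Sum>k. a^(2*k) / (fact k * fact (Suc k)) * ((cmod z)^(2*k) * exp (- ((cmod z)^2))))) \<partial>lborel) = ennreal ((1 - exp (- (a^2))) / (2*a^2))"
    unfolding c_def .
qed



lemma ftc_periodic:
  fixes F F' :: "real \<Rightarrow> real"
  assumes "\<And>t. (F has_real_derivative F' t) (at t)" and "F pi = F (-pi)"
  shows "(F' has_integral 0) {-pi..pi}"
proof -
  have "(F' has_integral (F pi - F (-pi))) {-pi..pi}"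
    by (rule fundamental_theorem_of_calculus)
      (auto intro: has_field_derivative_at_within assms(1) simp: has_real_derivative_iff_has_vector_derivative[symmetric])
  then show ?thesis using assms(2) by simp
qed

lemma sin_shift_pi: "sin (pi - \<phi>) = sin (-pi - \<phi>)" "cos (pi - \<phi>) = cos (-pi - \<phi>)"
  by (simp_all add: sin_diff cos_diff)

lemma mom_rec:
  "((\<lambda>t. (real n + 2) * cos (t-\<phi>)^(n+2) - (real n + 1) * cos (t-\<phi>)^n) has_integral 0) {-pi..pi}"
proof (rule ftc_periodic[where F="\<lambda>t. sin (t-\<phi>) * cos (t-\<phi>)^(Suc n)"])
  fix t
  have "((\<lambda>t. sin (t-\<phi>) * cos (t-\<phi>)^(Suc n)) has_real_derivative
     (cos (t-\<phi>) * cos (t-\<phi>)^(n+1) - sin (t-\<phi>) * (real (n+1) * cos (t-\<phi>)^n * sin (t-\<phi>)))) (at t)"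
  proof -
    have d1: "((\<lambda>t. cos (t-\<phi>)) has_real_derivative -sin (t-\<phi>)) (at t)"
      by (auto intro!: derivative_eq_intros)
    have d2: "((\<lambda>t. cos (t-\<phi>)^Suc n) has_real_derivative real (Suc n) * cos (t-\<phi>)^n * (-sin (t-\<phi>))) (at t)"
      using DERIV_power[OF d1, of "Suc n"] by (simp add: mult_ac del: power_Suc)
    have d3: "((\<lambda>t. sin (t-\<phi>)) has_real_derivative cos (t-\<phi>)) (at t)"
      by (auto intro!: derivative_eq_intros)
    show ?thesis using DERIV_mult[OF d3 d2] by (simp add: algebra_simps)
  qed
  moreover have "cos (t-\<phi>) * cos (t-\<phi>)^(n+1) - sin (t-\<phi>) * (real (n+1) * cos (t-\<phi>)^n * sin (t-\<phi>))
      = (real n + 2) * cos (t-\<phi>)^(n+2) - (real n + 1) * cos (t-\<phi>)^n"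
  proof -
    have s: "sin (t-\<phi>) * sin (t-\<phi>) = 1 - cos (t-\<phi>) * cos (t-\<phi>)"
      using sin_squared_eq[of "t-\<phi>"] by (simp add: power2_eq_square)
    have "sin (t-\<phi>) * (real (n+1) * cos (t-\<phi>)^n * sin (t-\<phi>)) = real (n+1) * cos (t-\<phi>)^n * (sin (t-\<phi>) * sin (t-\<phi>))"
      by (simp add: algebra_simps)
    also have "\<dots> = real (n+1) * cos (t-\<phi>)^n - real (n+1) * cos (t-\<phi>)^(n+2)"
      by (simp add: s algebra_simps power2_eq_square)
    finally show ?thesis by (simp add: algebra_simps)
  qed
  ultimately show "((\<lambda>t. sin (t-\<phi>) * cos (t-\<phi>)^(Suc n)) has_real_derivative
     (real n + 2) * cos (t-\<phi>)^(n+2) - (real n + 1) * cos (t-\<phi>)^n) (at t)" by simp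
qed (simp only: sin_shift_pi)

definition mm :: "nat \<Rightarrow> real" where
  "mm n = (if even n then 2 * pi * fact n / (2^n * (fact (n div 2))^2) else 0)"

lemma mm_rec: "(real n + 2) * mm (n+2) = (real n + 1) * mm n"
proof (cases "even n")
  case True
  then obtain k where n: "n = 2*k" by (auto elim: evenE)
  have f: "fact (2*k+2) = (2*real k + 2) * (2*real k+1) * (fact (2*k) :: real)"
    by (simp add: algebra_simps)
  have g: "fact ((2*k+2) div 2) = (real k + 1) * (fact k :: real)" by simp
  have p: "(2::real)^(2*k+2) = 4 * 2^(2*k)" by simp
  have aux0: "(2*K) * (2*pi*((2*K)*(2*K - 1)*A)/(4*P*(K*B)^2)) = (2*K-1) * (2*pi*A/(P*B^2))"
    if "A > 0" "B > 0" "P > 0" "K > 0" for A B P K :: real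
    using that by (simp add: field_simps power2_eq_square)
  have aux: "(2*real k + 2) * (2*pi*((2*real k + 2)*(2*real k + 1)*A)/(4*P*((real k + 1)*B)^2)) = (2*real k+1) * (2*pi*A/(P*B^2))"
    if "A > 0" "B > 0" "P > 0" for A B P :: real
    using aux0[OF that, of "real k + 1"] by (simp add: algebra_simps)
  have "even (2*k+2)" by simp
  then have "mm (2*k+2) = 2*pi*((2*real k + 2)*(2*real k + 1)*fact (2*k))/(4*2^(2*k)*((real k + 1)*fact k)^2)"
    unfolding mm_def by (simp only: if_True f g p)
  moreover have "mm (2*k) = 2*pi*fact (2*k)/(2^(2*k)*(fact k)^2)"
    unfolding mm_def by simp
  ultimately show ?thesis unfolding n using aux[of "fact (2*k)" "fact k" "2^(2*k)"]
    by (simp add: algebra_simps)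
next
  case False
  then show ?thesis by (simp add: mm_def)
qed

lemma mom: "((\<lambda>t. cos (t-\<phi>)^n) has_integral mm n) {-pi..pi}"
proof (induction n rule: less_induct)
  case (less n)
  show ?case
  proof (cases n)
    case 0
    then show ?thesis using has_integral_const_real[of "1::real" "-pi" pi] by (simp add: mm_def)
  next
    case (Suc n')
    show ?thesis
    proof (cases n')
      case 0
      have "((\<lambda>t. cos (t-\<phi>)) has_integral 0) {-pi..pi}"
        apply (rule ftc_periodic[where F="\<lambda>t. sin (t-\<phi>)"])
         apply (auto intro!: derivative_eq_intros)[1]
        apply (simp add: sin_diff)
        done
      then show ?thesis using Suc 0 by (simp add: mm_def)
    next
      case (Suc m)
      have n: "n = m + 2" using \<open>n = Suc n'\<close> Suc by simp
      have IH: "((\<lambda>t. cos (t-\<phi>)^m) has_integral mm m) {-pi..pi}" using less n by simp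
      have "(\<lambda>t. cos (t-\<phi>)^(m+2)) integrable_on {-pi..pi}"
        by (intro integrable_continuous_interval continuous_intros)
      then obtain I where I: "((\<lambda>t. cos (t-\<phi>)^(m+2)) has_integral I) {-pi..pi}" by blast
      have "((\<lambda>t. (real m + 2) * cos (t-\<phi>)^(m+2) - (real m + 1) * cos (t-\<phi>)^m) has_integral
             ((real m + 2) * I - (real m + 1) * mm m)) {-pi..pi}"
        by (intro has_integral_diff has_integral_mult_right I IH)
      then have "(real m + 2) * I - (real m + 1) * mm m = 0"
        using mom_rec[of m \<phi>] by (rule has_integral_unique)
      then have "I = mm (m+2)" using mm_rec[of m]
        by (smt (verit) mult_cancel_left of_nat_less_0_iff)
      then show ?thesis using I n by simp
    qed
  qed
qed

lemma exp_series_integral: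
  fixes \<psi> g :: "real \<Rightarrow> real" and x :: real
  assumes c\<psi>: "continuous_on {-pi..pi} \<psi>" and cg: "continuous_on {-pi..pi} g"
    and b\<psi>: "\<And>t. t \<in> {-pi..pi} \<Longrightarrow> \<bar>\<psi> t\<bar> \<le> 1"
    and I: "\<And>n. ((\<lambda>t. \<psi> t^n * g t) has_integral I n) {-pi..pi}"
  shows "(\<lambda>n. x^n / fact n * I n) sums integral {-pi..pi} (\<lambda>t. exp (x * \<psi> t) * g t)"
proof -
  obtain B where B: "\<And>t. t \<in> {-pi..pi} \<Longrightarrow> \<bar>g t\<bar> \<le> B"
    using compact_imp_bounded[OF compact_continuous_image[OF cg compact_Icc]] unfolding bounded_iff by (metis atLeastAtMost_iff image_eqI real_norm_def)
  define f where "f n t = x^n / fact n * (\<psi> t^n * g t)" for n t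
  have bound: "norm (f n t) \<le> \<bar>x\<bar>^n / fact n * B" if t: "t \<in> {-pi..pi}" for n t
  proof -
    have "\<bar>\<psi> t\<bar>^n \<le> 1" using b\<psi>[OF t] by (simp add: power_le_one)
    then have "\<bar>\<psi> t\<bar>^n * \<bar>g t\<bar> \<le> 1 * B"
      using B[OF t] by (intro mult_mono) auto
    then have "\<bar>x\<bar>^n / fact n * (\<bar>\<psi> t\<bar>^n * \<bar>g t\<bar>) \<le> \<bar>x\<bar>^n / fact n * B"
      by (intro mult_left_mono) auto
    then show ?thesis by (simp add: f_def abs_mult power_abs)
  qed
  have "summable (\<lambda>n. inverse (fact n) * \<bar>x\<bar>^n * B)"
    by (intro summable_mult2 summable_exp)
  then have summ: "summable (\<lambda>n. \<bar>x\<bar>^n / fact n * B)"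
    by (simp add: divide_inverse mult_ac)
  have lim: "(\<lambda>n. f n t) sums (exp (x * \<psi> t) * g t)" for t
  proof -
    have "(\<lambda>n. (x * \<psi> t)^n /\<^sub>R fact n * g t) sums (exp (x * \<psi> t) * g t)"
      by (intro sums_mult2 exp_converges)
    moreover have "(x * \<psi> t)^n /\<^sub>R fact n * g t = f n t" for n
      by (simp add: f_def power_mult_distrib real_scaleR_def divide_inverse mult_ac)
    ultimately show ?thesis by simp
  qed
  have eqf: "(\<lambda>t. suminf (\<lambda>i. f i t)) = (\<lambda>t. exp (x * \<psi> t) * g t)"
    using lim by (simp add: sums_iff fun_eq_iff)
  have u: "uniform_limit {-pi..pi} (\<lambda>n t. \<Sum>i<n. f i t) (\<lambda>t. exp (x * \<psi> t) * g t) sequentially"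
  proof -
    have "uniform_limit {-pi..pi} (\<lambda>n t. \<Sum>i<n. f i t) (\<lambda>t. suminf (\<lambda>i. f i t)) sequentially"
      by (rule Weierstrass_m_test[where M="\<lambda>n. \<bar>x\<bar>^n / fact n * B"]) (use bound summ in auto)
    then show ?thesis unfolding eqf .
  qed
  have cont: "continuous_on {-pi..pi} (\<lambda>t. \<Sum>i<n. f i t)" for n
    unfolding f_def by (intro continuous_intros c\<psi> cg)
  obtain Is J where Is: "\<And>n. ((\<lambda>t. \<Sum>i<n. f i t) has_integral Is n) {-pi..pi}"
    and J: "((\<lambda>t. exp (x * \<psi> t) * g t) has_integral J) {-pi..pi}" and lim2: "Is \<longlonglongrightarrow> J"
    by (rule uniform_limit_integral[OF u cont]) auto
  have "((\<lambda>t. \<Sum>i<n. f i t) has_integral (\<Sum>i<n. x^i / fact i * I i)) {-pi..pi}" for n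
    unfolding f_def by (intro has_integral_sum has_integral_mult_right I) auto
  then have "Is n = (\<Sum>i<n. x^i / fact i * I i)" for n
    using Is has_integral_unique by blast
  then have "Is = (\<lambda>n. \<Sum>i<n. x^i / fact i * I i)" by auto
  then have "(\<lambda>n. x^n / fact n * I n) sums J"
    using lim2 unfolding sums_def by simp
  then show ?thesis using J by (simp add: integral_unique)
qed



lemma mm_even: "mm (2*k) = 2 * pi * (fact (2*k) / (2^(2*k) * (fact k)^2))"
  by (simp add: mm_def)

lemma mm_odd: "odd n \<Longrightarrow> mm n = 0"
  by (simp add: mm_def)

lemma cos_shift_bound: fixes t \<phi> :: real shows "\<bar>cos (t - \<phi>)\<bar> \<le> 1" by simp

lemma reindex_even:
  fixes f :: "nat \<Rightarrow> real"
  assumes "\<And>n. odd n \<Longrightarrow> f n = 0" "f sums s"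
  shows "(\<lambda>k. f (2*k)) sums s"
proof -
  have "strict_mono (\<lambda>k::nat. 2*k)" by (auto simp: strict_mono_def)
  moreover have "f n = 0" if "n \<notin> range (\<lambda>k::nat. 2*k)" for n
    using that assms(1) by (metis evenE rangeI)
  ultimately show ?thesis using sums_mono_reindex assms(2) by blast
qed

lemma E_has_integral:
  "((\<lambda>t. exp (x * cos (t - \<phi>))) has_integral integral {-pi..pi} (\<lambda>t. exp (x * cos (t - \<phi>)))) {-pi..pi}"
  by (intro integrable_integral integrable_continuous_interval continuous_intros)

lemma E_series:
  "(\<lambda>k. (x/2)^(2*k) / (fact k)^2) sums (integral {-pi..pi} (\<lambda>t. exp (x * cos (t - \<phi>))) / (2*pi))"
proof -
  have "(\<lambda>n. x^n / fact n * mm n) sums integral {-pi..pi} (\<lambda>t. exp (x * cos (t - \<phi>)) * 1)"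
    by (rule exp_series_integral) (auto intro!: continuous_intros simp: mom cos_shift_bound)
  then have "(\<lambda>k. x^(2*k) / fact (2*k) * mm (2*k)) sums integral {-pi..pi} (\<lambda>t. exp (x * cos (t - \<phi>)))"
    by (intro reindex_even) (auto simp: mm_odd)
  then have "(\<lambda>k. x^(2*k) / fact (2*k) * mm (2*k) / (2*pi)) sums (integral {-pi..pi} (\<lambda>t. exp (x * cos (t - \<phi>))) / (2*pi))"
    by (rule sums_divide)
  moreover have "x^(2*k) / fact (2*k) * mm (2*k) / (2*pi) = (x/2)^(2*k) / (fact k)^2" for k
    unfolding mm_even by (simp add: power_divide field_simps)
  ultimately show ?thesis by simp
qed

lemma S_series:
  "(\<lambda>k. (x/2)^(2*k) / (fact k * fact (Suc k))) sums
     (integral {-pi..pi} (\<lambda>t. exp (x * cos (t - \<phi>)) * (sin (t - \<phi>))^2) / pi)"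
proof -
  have I: "((\<lambda>t. cos (t - \<phi>)^n * (sin (t - \<phi>))^2) has_integral (mm n - mm (n+2))) {-pi..pi}" for n
  proof -
    have "((\<lambda>t. cos (t - \<phi>)^n - cos (t - \<phi>)^(n+2)) has_integral (mm n - mm (n+2))) {-pi..pi}"
      by (intro has_integral_diff mom)
    moreover have "cos (t - \<phi>)^n - cos (t - \<phi>)^(n+2) = cos (t - \<phi>)^n * (sin (t - \<phi>))^2" for t
    proof -
      have "cos (t - \<phi>)^n - cos (t - \<phi>)^(n+2) = cos (t - \<phi>)^n * (1 - (cos (t - \<phi>))^2)"
        by (simp add: power_add algebra_simps power2_eq_square)
      also have "1 - (cos (t - \<phi>))^2 = (sin (t - \<phi>))^2" by (rule sin_squared_eq[symmetric])
      finally show ?thesis .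
    qed
    ultimately show ?thesis by simp
  qed
  have "(\<lambda>n. x^n / fact n * (mm n - mm (n+2))) sums integral {-pi..pi} (\<lambda>t. exp (x * cos (t - \<phi>)) * (sin (t - \<phi>))^2)"
    by (rule exp_series_integral[OF _ _ _ I]) (auto intro!: continuous_intros simp: cos_shift_bound)
  then have "(\<lambda>k. x^(2*k) / fact (2*k) * (mm (2*k) - mm (2*k+2))) sums integral {-pi..pi} (\<lambda>t. exp (x * cos (t - \<phi>)) * (sin (t - \<phi>))^2)"
    by (intro reindex_even) (auto simp: mm_odd)
  then have "(\<lambda>k. x^(2*k) / fact (2*k) * (mm (2*k) - mm (2*k+2)) / pi) sums (integral {-pi..pi} (\<lambda>t. exp (x * cos (t - \<phi>)) * (sin (t - \<phi>))^2) / pi)"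
    by (rule sums_divide)
  moreover have "x^(2*k) / fact (2*k) * (mm (2*k) - mm (2*k+2)) / pi = (x/2)^(2*k) / (fact k * fact (Suc k))" for k
  proof -
    have r: "(real (2*k) + 2) * mm (2*k+2) = (real (2*k) + 1) * mm (2*k)" by (rule mm_rec)
    have d: "mm (2*k) - mm (2*k+2) = mm (2*k) / (2 * (real k + 1))"
      using r by (simp add: field_simps)
    have aux: "X/F * ((2*pi*(F/(P*Q^2))) / (2*K)) / pi = (X/P)/(Q*(K*Q))"
      if "F > 0" "P > 0" "Q > 0" "K > 0" for X F P Q K :: real
      using that by (simp add: field_simps power2_eq_square)
    have "x^(2*k) / fact (2*k) * (mm (2*k) - mm (2*k+2)) / pi
        = x^(2*k)/fact (2*k) * ((2*pi*(fact (2*k)/(2^(2*k)*(fact k)^2))) / (2*(real k + 1))) / pi"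
      unfolding d unfolding mm_even ..
    also have "\<dots> = (x^(2*k)/2^(2*k))/(fact k*((real k + 1)*fact k))"
      by (rule aux) auto
    also have "\<dots> = (x/2)^(2*k) / (fact k * fact (Suc k))"
      by (simp add: power_divide)
    finally show ?thesis .
  qed
  ultimately show ?thesis by simp
qed

lemma C_eq:
  "((\<lambda>t. exp (x * cos (t - \<phi>)) * cos (t - \<phi>)) has_integral
     (x * integral {-pi..pi} (\<lambda>t. exp (x * cos (t - \<phi>)) * (sin (t - \<phi>))^2))) {-pi..pi}"
proof -
  let ?S = "integral {-pi..pi} (\<lambda>t. exp (x * cos (t - \<phi>)) * (sin (t - \<phi>))^2)"
  have hS: "((\<lambda>t. exp (x * cos (t - \<phi>)) * (sin (t - \<phi>))^2) has_integral ?S) {-pi..pi}"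
    by (intro integrable_integral integrable_continuous_interval continuous_intros)
  have "((\<lambda>t. exp (x * cos (t - \<phi>)) * cos (t - \<phi>)) integrable_on {-pi..pi})"
    by (intro integrable_continuous_interval continuous_intros)
  then obtain C where hC: "((\<lambda>t. exp (x * cos (t - \<phi>)) * cos (t - \<phi>)) has_integral C) {-pi..pi}" by blast
  have "((\<lambda>t. exp (x * cos (t - \<phi>)) * cos (t - \<phi>) - x * (exp (x * cos (t - \<phi>)) * (sin (t - \<phi>))^2)) has_integral 0) {-pi..pi}"
  proof (rule ftc_periodic[where F="\<lambda>t. sin (t - \<phi>) * exp (x * cos (t - \<phi>))"])
    fix t
    show "((\<lambda>t. sin (t - \<phi>) * exp (x * cos (t - \<phi>))) has_real_derivative
        exp (x * cos (t - \<phi>)) * cos (t - \<phi>) - x * (exp (x * cos (t - \<phi>)) * (sin (t - \<phi>))^2)) (at t)"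
      by (auto intro!: derivative_eq_intros simp del: cos_diff sin_diff simp add: power2_eq_square algebra_simps)
  qed (simp only: sin_shift_pi)
  moreover have "((\<lambda>t. exp (x * cos (t - \<phi>)) * cos (t - \<phi>) - x * (exp (x * cos (t - \<phi>)) * (sin (t - \<phi>))^2)) has_integral (C - x * ?S)) {-pi..pi}"
    by (intro has_integral_diff has_integral_mult_right hC hS)
  ultimately have "C - x * ?S = 0" using has_integral_unique by blast
  then show ?thesis using hC by simp
qed

lemma D_eq:
  assumes "x \<noteq> 0"
  shows "((\<lambda>t. exp (x * cos (t - \<phi>)) * sin (t - \<phi>)) has_integral 0) {-pi..pi}"
proof -
  have "((\<lambda>t. - x * (exp (x * cos (t - \<phi>)) * sin (t - \<phi>))) has_integral 0) {-pi..pi}"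
  proof (rule ftc_periodic[where F="\<lambda>t. exp (x * cos (t - \<phi>))"])
    fix t
    show "((\<lambda>t. exp (x * cos (t - \<phi>))) has_real_derivative - x * (exp (x * cos (t - \<phi>)) * sin (t - \<phi>))) (at t)"
      by (auto intro!: derivative_eq_intros simp del: cos_diff sin_diff simp add: algebra_simps)
  qed (simp only: sin_shift_pi)
  then have "((\<lambda>t. (- 1 / x) * (- x * (exp (x * cos (t - \<phi>)) * sin (t - \<phi>)))) has_integral (- 1 / x) * 0) {-pi..pi}"
    by (rule has_integral_mult_right)
  then show ?thesis using assms by simp
qed



lemma coh_term:
  "cnj (coh b n) * coh g n = of_real (exp (-((cmod b)^2 + (cmod g)^2)/2)) * ((cnj b * g)^n /\<^sub>R fact n)"
proof -
  have sq: "complex_of_real (sqrt (fact n)) * complex_of_real (sqrt (fact n)) = of_real (fact n)"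
    by (simp flip: of_real_mult)
  have e: "exp (-((cmod b)^2 + (cmod g)^2)/2) = exp (- ((cmod b)^2) / 2) * exp (- ((cmod g)^2) / 2)"
    by (simp add: exp_add[symmetric] field_simps)
  have "cnj (coh b n) * coh g n = of_real (exp (- ((cmod b)^2) / 2)) * of_real (exp (- ((cmod g)^2) / 2)) * (cnj b ^ n * g ^ n)
        / (complex_of_real (sqrt (fact n)) * complex_of_real (sqrt (fact n)))"
    unfolding coh_def by (simp add: field_simps)
  also have "\<dots> = of_real (exp (-((cmod b)^2 + (cmod g)^2)/2)) * ((cnj b * g)^n /\<^sub>R fact n)"
    unfolding sq e by (simp add: scaleR_conv_of_real field_simps power_mult_distrib)
  finally show ?thesis .
qed

lemma coh_inner_eq:
  "coh_inner b g = of_real (exp (-((cmod b)^2 + (cmod g)^2)/2)) * exp (cnj b * g)"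
proof -
  have "(\<lambda>n. of_real (exp (-((cmod b)^2 + (cmod g)^2)/2)) * ((cnj b * g)^n /\<^sub>R fact n)) sums
        (of_real (exp (-((cmod b)^2 + (cmod g)^2)/2)) * exp (cnj b * g))"
    by (intro sums_mult exp_converges)
  then show ?thesis unfolding coh_inner_def coh_term by (simp add: sums_iff)
qed

lemma lik_eq:
  fixes a :: real
  shows "lik a b t = exp (-((cmod b)^2 + a^2)) / pi * exp (2 * a * Re (cnj b * cis (-t)))"
proof -
  let ?g = "cis (- t) * complex_of_real a"
  have n: "cmod ?g = \<bar>a\<bar>" by (simp add: norm_mult)
  have re: "Re (cnj b * ?g) = a * Re (cnj b * cis (-t))"
    by (simp add: right_diff_distrib mult_ac)
  have "(cmod (coh_inner b ?g))^2 = (exp (-((cmod b)^2 + a^2)/2) * exp (a * Re (cnj b * cis (-t))))^2"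
    unfolding coh_inner_eq n by (simp add: norm_mult right_diff_distrib mult_ac)
  also have "\<dots> = exp (-((cmod b)^2 + a^2)) * exp (2 * a * Re (cnj b * cis (-t)))"
    by (simp add: power2_eq_square exp_add[symmetric] field_simps)
  finally show ?thesis unfolding lik_def by simp
qed

lemma lik_phi:
  fixes a :: real
  assumes b: "b = complex_of_real (cmod b) * cis (- \<phi>)"
  shows "lik a b t = exp (-(a^2 + (cmod b)^2)) / pi * exp ((2 * a * cmod b) * cos (t - \<phi>))"
proof -
  have "cnj b * cis (-t) = complex_of_real (cmod b) * cis (\<phi> - t)"
    by (subst b) (simp add: cis_mult cis_cnj)
  then have "Re (cnj b * cis (-t)) = cmod b * cos (t - \<phi>)"
    by (simp add: cos_diff mult.commute)
  then show ?thesis unfolding lik_eq by (simp add: add.commute mult.assoc)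
qed

lemma exists_phi: "\<exists>\<phi>. b = complex_of_real (cmod b) * cis (- \<phi>)"
  using rcis_cmod_Arg[of b] by (intro exI[of _ "- Arg b"]) (simp add: rcis_def)



lemma besselI0_eq: "besselI0 x = integral {-pi..pi} (\<lambda>t. exp (x * cos (t - \<phi>))) / (2*pi)"
  unfolding besselI0_def using E_series[of x \<phi>] by (simp add: sums_iff)

lemma besselI0_ge1: "besselI0 x \<ge> 1"
proof -
  have s: "summable (\<lambda>k. (x/2)^(2*k) / (fact k)^2)" using E_series[of x 0] by (simp add: sums_iff)
  have "sum (\<lambda>k. (x/2)^(2*k) / (fact k)^2) {0} \<le> (\<Sum>k. (x/2)^(2*k) / (fact k)^2)"
    by (rule sum_le_suminf[OF s]) (auto simp: power_mult)
  then show ?thesis unfolding besselI0_def by simp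
qed

lemma S_ge: "integral {-pi..pi} (\<lambda>t. exp (x * cos (t - \<phi>)) * (sin (t - \<phi>))^2) \<ge> pi"
proof -
  let ?f = "\<lambda>k. (x/2)^(2*k) / (fact k * fact (Suc k))"
  have ss: "?f sums (integral {-pi..pi} (\<lambda>t. exp (x * cos (t - \<phi>)) * (sin (t - \<phi>))^2) / pi)"
    by (rule S_series)
  have "sum ?f {0} \<le> suminf ?f"
    by (rule sum_le_suminf) (use ss in \<open>auto simp: sums_iff power_mult\<close>)
  then have "1 \<le> integral {-pi..pi} (\<lambda>t. exp (x * cos (t - \<phi>)) * (sin (t - \<phi>))^2) / pi"
    using ss by (simp add: sums_iff)
  then show ?thesis by (simp add: field_simps)
qed

lemma p_marg_phi:
  fixes a :: real
  assumes b: "b = complex_of_real (cmod b) * cis (- \<phi>)"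
  shows "p_marg a b = exp (-(a^2 + (cmod b)^2)) / pi * besselI0 (2 * a * cmod b)"
proof -
  have "p_marg a b = integral {-pi..pi} (\<lambda>t. (exp (-(a^2 + (cmod b)^2)) / pi / (2*pi)) * exp ((2 * a * cmod b) * cos (t - \<phi>)))"
    unfolding p_marg_def prior_def lik_phi[OF b] by (simp add: mult_ac)
  also have "\<dots> = exp (-(a^2 + (cmod b)^2)) / pi * besselI0 (2 * a * cmod b)"
    by (simp add: besselI0_eq[of _ \<phi>])
  finally show ?thesis .
qed

lemma post_phi:
  fixes a :: real
  assumes b: "b = complex_of_real (cmod b) * cis (- \<phi>)"
  shows "post a b t = exp ((2 * a * cmod b) * cos (t - \<phi>)) / (2 * pi * besselI0 (2 * a * cmod b))"
proof -
  have "besselI0 (2 * a * cmod b) > 0" using besselI0_ge1 by (smt (verit))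
  then show ?thesis
    unfolding post_def p_marg_phi[OF b] lik_phi[OF b] prior_def
    by (simp add: field_simps)
qed

lemma cis_shift_expand:
  "complex_of_real p * cis t = cis \<phi> * (complex_of_real (p * cos (t - \<phi>)) + \<i> * complex_of_real (p * sin (t - \<phi>)))"
proof -
  have c: "cis t = cis \<phi> * cis (t - \<phi>)" by (simp add: cis_mult)
  have e: "complex_of_real p * cis (t - \<phi>) = complex_of_real (p * cos (t - \<phi>)) + \<i> * complex_of_real (p * sin (t - \<phi>))"
    by (simp add: complex_eq_iff)
  have "complex_of_real p * cis t = cis \<phi> * (complex_of_real p * cis (t - \<phi>))"
    by (subst c) (simp add: mult_ac)
  then show ?thesis by (simp only: e)
qed

lemma est_phi:
  fixes a :: real
  assumes a: "a > 0" and b0: "b \<noteq> 0" and b: "b = complex_of_real (cmod b) * cis (- \<phi>)"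
  shows "cis (est a b) = cis \<phi>"
proof -
  define x where "x = 2 * a * cmod b"
  have x: "x > 0" using a b0 by (simp add: x_def)
  define \<kappa> where "\<kappa> = 1 / (2 * pi * besselI0 x)"
  have I0: "besselI0 x > 0" using besselI0_ge1 by (smt (verit))
  have \<kappa>: "\<kappa> > 0" using I0 by (simp add: \<kappa>_def)
  define S where "S = integral {-pi..pi} (\<lambda>t. exp (x * cos (t - \<phi>)) * (sin (t - \<phi>))^2)"
  have S: "S > 0" using S_ge[of x \<phi>] pi_gt_zero unfolding S_def by linarith
  have post: "post a b t = \<kappa> * exp (x * cos (t - \<phi>))" for t
    unfolding post_phi[OF b] \<kappa>_def x_def by simp
  have h1: "((\<lambda>t. complex_of_real (\<kappa> * (exp (x * cos (t - \<phi>)) * cos (t - \<phi>)))) has_integral complex_of_real (\<kappa> * (x * S))) {-pi..pi}"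
    unfolding S_def by (intro has_integral_of_real has_integral_mult_right C_eq)
  have h2: "((\<lambda>t. \<i> * complex_of_real (\<kappa> * (exp (x * cos (t - \<phi>)) * sin (t - \<phi>)))) has_integral \<i> * complex_of_real (\<kappa> * 0)) {-pi..pi}"
    using x by (intro has_integral_of_real has_integral_mult_right D_eq) simp
  have "((\<lambda>t. cis \<phi> * (complex_of_real (\<kappa> * (exp (x * cos (t - \<phi>)) * cos (t - \<phi>))) + \<i> * complex_of_real (\<kappa> * (exp (x * cos (t - \<phi>)) * sin (t - \<phi>)))))
      has_integral cis \<phi> * (complex_of_real (\<kappa> * (x * S)) + \<i> * complex_of_real (\<kappa> * 0))) {-pi..pi}"
    by (intro has_integral_mult_right has_integral_add h1 h2)
  moreover have "complex_of_real (post a b t) * cis t = cis \<phi> * (complex_of_real (\<kappa> * (exp (x * cos (t - \<phi>)) * cos (t - \<phi>))) + \<i> * complex_of_real (\<kappa> * (exp (x * cos (t - \<phi>)) * sin (t - \<phi>))))" for t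
    unfolding post cis_shift_expand[of _ t \<phi>] by (simp add: mult_ac)
  ultimately have "((\<lambda>t. complex_of_real (post a b t) * cis t) has_integral cis \<phi> * complex_of_real (\<kappa> * (x * S))) {-pi..pi}"
    by simp
  then have est: "est a b = Arg (cis \<phi> * complex_of_real (\<kappa> * (x * S)))"
    unfolding est_def by (simp add: integral_unique)
  have pos: "\<kappa> * (x * S) > 0" using \<kappa> x S by simp
  have "cis (est a b) = sgn (cis \<phi> * complex_of_real (\<kappa> * (x * S)))"
    unfolding est using \<kappa> x S by (intro cis_Arg) simp
  also have "\<dots> = cis \<phi>" using \<kappa> x S by (simp add: sgn_mult sgn_of_real)
  finally show ?thesis .
qed



lemma F_eq:
  fixes a :: real
  assumes a: "a > 0" and b0: "b \<noteq> 0"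
  shows "p_marg a b * Vpost a b = exp (- (a^2)) / (2*pi) *
     (\<Sum>k. a^(2*k) / (fact k * fact (Suc k)) * ((cmod b)^(2*k) * exp (- ((cmod b)^2))))"
proof -
  obtain \<phi> where b: "b = complex_of_real (cmod b) * cis (- \<phi>)" using exists_phi by blast
  define x where "x = 2 * a * cmod b"
  define S where "S = integral {-pi..pi} (\<lambda>t. exp (x * cos (t - \<phi>)) * (sin (t - \<phi>))^2)"
  have I0: "besselI0 x > 0" using besselI0_ge1 by (smt (verit))
  have ce: "cis (est a b) = cis \<phi>" by (rule est_phi[OF a b0 b])
  have "cos (est a b) = cos \<phi>" using ce by (metis cis.sel(1))
  moreover have "sin (est a b) = sin \<phi>" using ce by (metis cis.sel(2))
  ultimately have sn: "sin (t - est a b) = sin (t - \<phi>)" for t by (simp add: sin_diff)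
  have V: "Vpost a b = S / (2 * pi * besselI0 x)"
  proof -
    have "Vpost a b = integral {-pi..pi} (\<lambda>t. (1 / (2 * pi * besselI0 x)) * (exp (x * cos (t - \<phi>)) * (sin (t - \<phi>))^2))"
      unfolding Vpost_def sn post_phi[OF b] x_def by simp
    also have "\<dots> = S / (2 * pi * besselI0 x)" unfolding S_def by simp
    finally show ?thesis .
  qed
  have P: "p_marg a b = exp (-(a^2 + (cmod b)^2)) / pi * besselI0 x"
    unfolding x_def by (rule p_marg_phi[OF b])
  have PV: "p_marg a b * Vpost a b = exp (-(a^2 + (cmod b)^2)) / (2*pi) * (S / pi)"
    unfolding P V using I0 by (simp add: field_simps)
  have ss: "(\<lambda>k. (x/2)^(2*k) / (fact k * fact (Suc k))) sums (S / pi)"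
    unfolding S_def by (rule S_series)
  then have sm: "(\<lambda>k. exp (- ((cmod b)^2)) * ((x/2)^(2*k) / (fact k * fact (Suc k)))) sums (exp (- ((cmod b)^2)) * (S / pi))"
    by (rule sums_mult)
  have fe: "(\<lambda>k. exp (- ((cmod b)^2)) * ((x/2)^(2*k) / (fact k * fact (Suc k)))) =
      (\<lambda>k. a^(2*k) / (fact k * fact (Suc k)) * ((cmod b)^(2*k) * exp (- ((cmod b)^2))))"
    unfolding x_def by (rule ext) (simp add: power_mult_distrib field_simps)
  have sumeq: "(\<Sum>k. a^(2*k) / (fact k * fact (Suc k)) * ((cmod b)^(2*k) * exp (- ((cmod b)^2)))) = exp (- ((cmod b)^2)) * (S / pi)"
    using sm unfolding fe by (simp add: sums_iff)
  have ee: "exp (-(a^2 + (cmod b)^2)) = exp (- (a^2)) * exp (- ((cmod b)^2))"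
    by (simp add: exp_add[symmetric])
  show ?thesis unfolding PV sumeq ee by (simp add: mult_ac)
qed

theorem mainTheorem4:
  fixes \<alpha> :: real
  assumes "\<alpha> > 0"
  shows "(\<forall>\<beta>. p_marg \<alpha> \<beta> = (1 / pi) * exp (- (\<alpha>\<^sup>2 + (cmod \<beta>)\<^sup>2)) * besselI0 (2 * \<alpha> * cmod \<beta>))
       \<and> (\<forall>\<beta> \<phi> \<theta>. \<beta> = complex_of_real (cmod \<beta>) * cis (- \<phi>) \<longrightarrow>
            post \<alpha> \<beta> \<theta> = exp (2 * \<alpha> * cmod \<beta> * cos (\<theta> - \<phi>)) / (2 * pi * besselI0 (2 * \<alpha> * cmod \<beta>)))
       \<and> (\<forall>\<beta> \<phi>. \<beta> \<noteq> 0 \<longrightarrow> \<beta> = complex_of_real (cmod \<beta>) * cis (- \<phi>) \<longrightarrow> cis (est \<alpha> \<beta>) = cis \<phi>)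
       \<and> ((\<lambda>\<beta>. p_marg \<alpha> \<beta> * Vpost \<alpha> \<beta>) has_integral ((1 - exp (- \<alpha>\<^sup>2)) / (2 * \<alpha>\<^sup>2))) UNIV"
proof (intro conjI allI impI)
  fix \<beta> :: complex
  obtain \<phi> where b: "\<beta> = complex_of_real (cmod \<beta>) * cis (- \<phi>)" using exists_phi by blast
  show "p_marg \<alpha> \<beta> = (1 / pi) * exp (- (\<alpha>\<^sup>2 + (cmod \<beta>)\<^sup>2)) * besselI0 (2 * \<alpha> * cmod \<beta>)"
    using p_marg_phi[OF b, of \<alpha>] by simp
next
  fix \<beta> :: complex and \<phi> \<theta> :: real
  assume b: "\<beta> = complex_of_real (cmod \<beta>) * cis (- \<phi>)"
  show "post \<alpha> \<beta> \<theta> = exp (2 * \<alpha> * cmod \<beta> * cos (\<theta> - \<phi>)) / (2 * pi * besselI0 (2 * \<alpha> * cmod \<beta>))"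
    by (rule post_phi[OF b])
next
  fix \<beta> :: complex and \<phi> :: real
  assume "\<beta> \<noteq> 0" "\<beta> = complex_of_real (cmod \<beta>) * cis (- \<phi>)"
  then show "cis (est \<alpha> \<beta>) = cis \<phi>" using est_phi assms by blast
next
  have G: "((\<lambda>z::complex. exp (- (\<alpha>^2)) / (2*pi) * (\<Sum>k. \<alpha>^(2*k) / (fact k * fact (Suc k)) * ((cmod z)^(2*k) * exp (- ((cmod z)^2)))))
     has_integral ((1 - exp (- (\<alpha>^2))) / (2*\<alpha>^2))) UNIV"
    by (rule G_integral[OF assms])
  show "((\<lambda>\<beta>. p_marg \<alpha> \<beta> * Vpost \<alpha> \<beta>) has_integral ((1 - exp (- \<alpha>\<^sup>2)) / (2 * \<alpha>\<^sup>2))) UNIV"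
    by (rule has_integral_spike[OF negligible_sing[of 0] _ G]) (use F_eq[OF assms] in auto)
qed

end
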